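(* Let $Q_{1}=(Q_{1,i})_{i\in[d]}$ and $Q_{2}=(Q_{2,i})_{i\in[d]}$ be nonnegative vectors with $Q_{1,i}+Q_{2,i}>0$ for all $i\in[d]$, let $I_0\subset[d]$ be the largest reference set (so that $Q_{1,i}=bQ_{2,i}$ for all $i\in I_0$ for some $b>0$, and every $i\notin I_0$ is differential with respect to $I_0$), and let $I_1=[d]\setminus I_0$. Run the following iterative procedure: set $U_{(0)}=\emptyset$, $V_{(0)}=[d]$; for $t=0,1,\ldots$, (a) compute $M(V_{(t)})=\mathrm{Median}\{R_i(V_{(t)}):i\in V_{(t)}\}$; (b) set $W_{(t)}=W^{+}(V_{(t)})\cup W^{-}(V_{(t)})$ if $M(V_{(t)})=0$, $W_{(t)}=W^{-}(V_{(t)})\cup W^{o}(V_{(t)})$ if $M(V_{(t)})>0$, and $W_{(t)}=W^{+}(V_{(t)})\cup W^{o}(V_{(t)})$ if $M(V_{(t)})<0$; (c) set $U_{(t+1)}=U_{(t)}\cup W_{(t)}$, $V_{(t+1)}=V_{(t)}\setminus W_{(t)}$, and stop if $W_{(t)}=\emptyset$. Let $T$ be the iteration at which the loop stops, and set $\hat I_0=V_{(T)}$, $\hat I_1=U_{(T)}$. If $|I_0|>d/2$, then $$T\le |I_1|+1,\qquad \hat I_0=I_0,\qquad \hat I_1=I_1.$$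
   Context: $[d]=\{1,\ldots,d\}$. $Q_{k,i}$ denotes the (known) expected relative abundance of component $i$ in population $k\in\{1,2\}$. A subset $I_0\subset[d]$ is a reference set if there exists $b>0$ with $Q_{1,i}=bQ_{2,i}$ for all $i\in I_0$; component $i$ is differential with respect to $I_0$ if $Q_{1,i}/\sum_{i'\in I_0}Q_{1,i'}\ne Q_{2,i}/\sum_{i'\in I_0}Q_{2,i'}$. For $I\subset[d]$ and $i\in I$, $R_i(I)=Q_{1,i}/\sum_{i'\in I}Q_{1,i'}-Q_{2,i}/\sum_{i'\in I}Q_{2,i'}$, and $W^{+}(I)=\{i\in I:R_i(I)>0\}$, $W^{-}(I)=\{i\in I:R_i(I)<0\}$, $W^{o}(I)=\{i\in I:R_i(I)=0\}$. *)

theory Defs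
  imports Complex_Main
begin

text \<open>Components are indexed by [d] = {1..d}; Q1 i, Q2 i are the expected relative abundances.\<close>

definition is_reference_set :: "(nat \<Rightarrow> real) \<Rightarrow> (nat \<Rightarrow> real) \<Rightarrow> nat set \<Rightarrow> bool" where
  "is_reference_set Q1 Q2 I0 \<longleftrightarrow> (\<exists>b>0. \<forall>i\<in>I0. Q1 i = b * Q2 i)"

definition is_differential :: "(nat \<Rightarrow> real) \<Rightarrow> (nat \<Rightarrow> real) \<Rightarrow> nat set \<Rightarrow> nat \<Rightarrow> bool" where
  "is_differential Q1 Q2 I0 i \<longleftrightarrow>
     Q1 i / (\<Sum>j\<in>I0. Q1 j) \<noteq> Q2 i / (\<Sum>j\<in>I0. Q2 j)"

definition Rval :: "(nat \<Rightarrow> real) \<Rightarrow> (nat \<Rightarrow> real) \<Rightarrow> nat set \<Rightarrow> nat \<Rightarrow> real" where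
  "Rval Q1 Q2 I i = Q1 i / (\<Sum>j\<in>I. Q1 j) - Q2 i / (\<Sum>j\<in>I. Q2 j)"

definition Wplus :: "(nat \<Rightarrow> real) \<Rightarrow> (nat \<Rightarrow> real) \<Rightarrow> nat set \<Rightarrow> nat set" where
  "Wplus Q1 Q2 I = {i\<in>I. Rval Q1 Q2 I i > 0}"

definition Wminus :: "(nat \<Rightarrow> real) \<Rightarrow> (nat \<Rightarrow> real) \<Rightarrow> nat set \<Rightarrow> nat set" where
  "Wminus Q1 Q2 I = {i\<in>I. Rval Q1 Q2 I i < 0}"

definition Wzero :: "(nat \<Rightarrow> real) \<Rightarrow> (nat \<Rightarrow> real) \<Rightarrow> nat set \<Rightarrow> nat set" where
  "Wzero Q1 Q2 I = {i\<in>I. Rval Q1 Q2 I i = 0}"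

definition median :: "real list \<Rightarrow> real" where
  "median xs = (let ys = sort xs; n = length ys in
     if odd n then ys ! (n div 2) else (ys ! (n div 2 - 1) + ys ! (n div 2)) / 2)"

definition Mval :: "(nat \<Rightarrow> real) \<Rightarrow> (nat \<Rightarrow> real) \<Rightarrow> nat set \<Rightarrow> real" where
  "Mval Q1 Q2 V = median (map (Rval Q1 Q2 V) (sorted_list_of_set V))"

definition Wstep :: "(nat \<Rightarrow> real) \<Rightarrow> (nat \<Rightarrow> real) \<Rightarrow> nat set \<Rightarrow> nat set" where
  "Wstep Q1 Q2 V =
     (if Mval Q1 Q2 V = 0 then Wplus Q1 Q2 V \<union> Wminus Q1 Q2 V
      else if Mval Q1 Q2 V > 0 then Wminus Q1 Q2 V \<union> Wzero Q1 Q2 V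
      else Wplus Q1 Q2 V \<union> Wzero Q1 Q2 V)"

fun UV :: "(nat \<Rightarrow> real) \<Rightarrow> (nat \<Rightarrow> real) \<Rightarrow> nat \<Rightarrow> nat \<Rightarrow> nat set \<times> nat set" where
  "UV Q1 Q2 d 0 = ({}, {1..d})"
| "UV Q1 Q2 d (Suc t) =
     (let (U, V) = UV Q1 Q2 d t; W = Wstep Q1 Q2 V in (U \<union> W, V - W))"

definition Uit :: "(nat \<Rightarrow> real) \<Rightarrow> (nat \<Rightarrow> real) \<Rightarrow> nat \<Rightarrow> nat \<Rightarrow> nat set" where
  "Uit Q1 Q2 d t = fst (UV Q1 Q2 d t)"

definition Vit :: "(nat \<Rightarrow> real) \<Rightarrow> (nat \<Rightarrow> real) \<Rightarrow> nat \<Rightarrow> nat \<Rightarrow> nat set" where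
  "Vit Q1 Q2 d t = snd (UV Q1 Q2 d t)"

end

theory Submission
  imports Defs
begin
lemma sorted_up:
  fixes ys :: "real list"
  assumes s: "sorted ys" and up: "\<And>x y. P x \<Longrightarrow> x \<le> y \<Longrightarrow> P y"
    and cnt: "2 * length (filter P ys) > length ys"
    and j: "j < length ys" "length ys \<le> 2 * (j + 1)"
  shows "P (ys ! j)"
proof (rule ccontr)
  assume np: "\<not> P (ys ! j)"
  have "{i. i < length ys \<and> P (ys ! i)} \<subseteq> {j+1..<length ys}"
  proof
    fix i assume "i \<in> {i. i < length ys \<and> P (ys ! i)}"
    hence i: "i < length ys" "P (ys ! i)" by auto
    have "i > j"
    proof (rule ccontr)
      assume "\<not> i > j"
      hence "ys ! i \<le> ys ! j" using s j i by (simp add: sorted_iff_nth_mono)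
      thus False using up i np by blast
    qed
    thus "i \<in> {j+1..<length ys}" using i by auto
  qed
  hence "card {i. i < length ys \<and> P (ys ! i)} \<le> length ys - (j+1)"
    by (metis card_atLeastLessThan card_mono finite_atLeastLessThan)
  thus False using cnt j by (simp add: length_filter_conv_card)
qed

lemma sorted_down:
  fixes ys :: "real list"
  assumes s: "sorted ys" and dn: "\<And>x y. P y \<Longrightarrow> x \<le> y \<Longrightarrow> P x"
    and cnt: "2 * length (filter P ys) > length ys"
    and j: "j < length ys" "2 * j \<le> length ys"
  shows "P (ys ! j)"
proof (rule ccontr)
  assume np: "\<not> P (ys ! j)"
  have "{i. i < length ys \<and> P (ys ! i)} \<subseteq> {..<j}"
  proof
    fix i assume "i \<in> {i. i < length ys \<and> P (ys ! i)}"
    hence i: "i < length ys" "P (ys ! i)" by auto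
    have "i < j"
    proof (rule ccontr)
      assume "\<not> i < j"
      hence "ys ! j \<le> ys ! i" using s j i by (simp add: sorted_iff_nth_mono)
      thus False using dn i np by blast
    qed
    thus "i \<in> {..<j}" by auto
  qed
  hence "card {i. i < length ys \<and> P (ys ! i)} \<le> j"
    by (metis card_lessThan card_mono finite_lessThan)
  thus False using cnt j by (simp add: length_filter_conv_card)
qed

lemma median_gt:
  assumes "2 * length (filter (\<lambda>x. x > a) xs) > length xs"
  shows "median xs > a"
proof -
  let ?ys = "sort xs" let ?n = "length xs"
  have c: "2 * length (filter (\<lambda>x. x > a) ?ys) > length ?ys" using assms by (simp add: filter_sort)
  have up: "\<And>x y. x > a \<Longrightarrow> x \<le> y \<Longrightarrow> y > a" by simp
  have n: "?n > 0" using assms by (cases xs) auto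
  have h1: "?ys ! (?n div 2) > a"
    using sorted_up[where P="\<lambda>x. x > a", OF sorted_sort up c] n by simp
  show ?thesis
  proof (cases "odd ?n")
    case True thus ?thesis using h1 by (simp add: median_def Let_def)
  next
    case False
    have A: "?n div 2 - 1 < length ?ys" using n by (simp add: less_imp_diff_less)
    have B: "length ?ys \<le> 2 * (?n div 2 - 1 + 1)" "2 * (?n div 2 - 1) \<le> length ?ys" using n False by auto
    have "?ys ! (?n div 2 - 1) > a"
      using sorted_up[where P="\<lambda>x. x > a", OF sorted_sort up c A] B by simp
    thus ?thesis using h1 False by (simp add: median_def Let_def)
  qed
qed

lemma median_ge:
  assumes "2 * length (filter (\<lambda>x. x \<ge> a) xs) > length xs"
  shows "median xs \<ge> a"
proof -
  let ?ys = "sort xs" let ?n = "length xs"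
  have c: "2 * length (filter (\<lambda>x. x \<ge> a) ?ys) > length ?ys" using assms by (simp add: filter_sort)
  have up: "\<And>x y. x \<ge> a \<Longrightarrow> x \<le> y \<Longrightarrow> y \<ge> a" by simp
  have n: "?n > 0" using assms by (cases xs) auto
  have h1: "?ys ! (?n div 2) \<ge> a"
    using sorted_up[where P="\<lambda>x. x \<ge> a", OF sorted_sort up c] n by simp
  show ?thesis
  proof (cases "odd ?n")
    case True thus ?thesis using h1 by (simp add: median_def Let_def)
  next
    case False
    have A: "?n div 2 - 1 < length ?ys" using n by (simp add: less_imp_diff_less)
    have B: "length ?ys \<le> 2 * (?n div 2 - 1 + 1)" "2 * (?n div 2 - 1) \<le> length ?ys" using n False by auto
    have "?ys ! (?n div 2 - 1) \<ge> a"
      using sorted_up[where P="\<lambda>x. x \<ge> a", OF sorted_sort up c A] B by simp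
    thus ?thesis using h1 False by (simp add: median_def Let_def)
  qed
qed

lemma median_lt:
  assumes "2 * length (filter (\<lambda>x. x < a) xs) > length xs"
  shows "median xs < a"
proof -
  let ?ys = "sort xs" let ?n = "length xs"
  have c: "2 * length (filter (\<lambda>x. x < a) ?ys) > length ?ys" using assms by (simp add: filter_sort)
  have dn: "\<And>x y. y < a \<Longrightarrow> x \<le> y \<Longrightarrow> x < a" by simp
  have n: "?n > 0" using assms by (cases xs) auto
  have h1: "?ys ! (?n div 2) < a"
    using sorted_down[where P="\<lambda>x. x < a", OF sorted_sort dn c] n by simp
  show ?thesis
  proof (cases "odd ?n")
    case True thus ?thesis using h1 by (simp add: median_def Let_def)
  next
    case False
    have A: "?n div 2 - 1 < length ?ys" using n by (simp add: less_imp_diff_less)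
    have B: "length ?ys \<le> 2 * (?n div 2 - 1 + 1)" "2 * (?n div 2 - 1) \<le> length ?ys" using n False by auto
    have "?ys ! (?n div 2 - 1) < a"
      using sorted_down[where P="\<lambda>x. x < a", OF sorted_sort dn c A] B by simp
    thus ?thesis using h1 False by (simp add: median_def Let_def)
  qed
qed

lemma median_le:
  assumes "2 * length (filter (\<lambda>x. x \<le> a) xs) > length xs"
  shows "median xs \<le> a"
proof -
  let ?ys = "sort xs" let ?n = "length xs"
  have c: "2 * length (filter (\<lambda>x. x \<le> a) ?ys) > length ?ys" using assms by (simp add: filter_sort)
  have dn: "\<And>x y. y \<le> a \<Longrightarrow> x \<le> y \<Longrightarrow> x \<le> a" by simp
  have n: "?n > 0" using assms by (cases xs) auto
  have h1: "?ys ! (?n div 2) \<le> a"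
    using sorted_down[where P="\<lambda>x. x \<le> a", OF sorted_sort dn c] n by simp
  show ?thesis
  proof (cases "odd ?n")
    case True thus ?thesis using h1 by (simp add: median_def Let_def)
  next
    case False
    have A: "?n div 2 - 1 < length ?ys" using n by (simp add: less_imp_diff_less)
    have B: "length ?ys \<le> 2 * (?n div 2 - 1 + 1)" "2 * (?n div 2 - 1) \<le> length ?ys" using n False by auto
    have "?ys ! (?n div 2 - 1) \<le> a"
      using sorted_down[where P="\<lambda>x. x \<le> a", OF sorted_sort dn c A] B by simp
    thus ?thesis using h1 False by (simp add: median_def Let_def)
  qed
qed
lemma count_lemma:
  assumes fin: "finite V" and sub: "I0 \<subseteq> V" and maj: "2 * card I0 > card V"
    and P: "\<forall>i\<in>I0. P (f i)"
  shows "2 * length (filter P (map f (sorted_list_of_set V))) > length (map f (sorted_list_of_set V))"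
proof -
  have "length (filter P (map f (sorted_list_of_set V))) = card ({x. P (f x)} \<inter> V)"
    using fin by (simp add: filter_map distinct_length_filter)
  moreover have "card I0 \<le> card ({x. P (f x)} \<inter> V)"
    using fin sub P by (intro card_mono) auto
  ultimately show ?thesis using fin maj by simp
qed

lemma key:
  fixes Q1 Q2 :: "nat \<Rightarrow> real" and d :: nat and I0 V :: "nat set" and b :: real
  assumes nonneg1: "\<forall>i\<in>{1..d}. Q1 i \<ge> 0"
    and nonneg2: "\<forall>i\<in>{1..d}. Q2 i \<ge> 0"
    and pos: "\<forall>i\<in>{1..d}. Q1 i + Q2 i > 0"
    and I0_sub: "I0 \<subseteq> {1..d}"
    and b: "b > 0" and ref: "\<forall>i\<in>I0. Q1 i = b * Q2 i"
    and I0_largest: "\<forall>i\<in>{1..d} - I0. is_differential Q1 Q2 I0 i"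
    and maj: "2 * card I0 > d"
    and V1: "I0 \<subseteq> V" and V2: "V \<subseteq> {1..d}"
  shows "Wstep Q1 Q2 V \<subseteq> V - I0 \<and> (V \<noteq> I0 \<longrightarrow> Wstep Q1 Q2 V \<noteq> {})"
proof -
  define R where "R = Rval Q1 Q2 V"
  define S1 where "S1 = sum Q1 V"
  define S2 where "S2 = sum Q2 V"
  define xs where "xs = map R (sorted_list_of_set V)"
  have finV: "finite V" using V2 finite_subset by blast
  have finI0: "finite I0" using I0_sub finite_subset by blast
  have cardV: "card V \<le> d" using V2 card_mono[of "{1..d}" V] by simp
  have majV: "2 * card I0 > card V" using maj cardV by linarith
  have I0ne: "I0 \<noteq> {}" using maj by auto
  have Q2pos: "Q2 i > 0" if "i \<in> I0" for i
  proof -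
    have "Q1 i + Q2 i > 0" "Q2 i \<ge> 0" using pos nonneg2 I0_sub that by auto
    moreover have "Q1 i + Q2 i = (b + 1) * Q2 i" using ref that by (simp add: algebra_simps)
    ultimately show ?thesis using b by (cases "Q2 i = 0") auto
  qed
  have Q1pos: "Q1 i > 0" if "i \<in> I0" for i using Q2pos[OF that] ref that b by simp
  have T1: "sum Q1 I0 > 0" using finI0 I0ne Q1pos by (simp add: sum_pos)
  have T2: "sum Q2 I0 > 0" using finI0 I0ne Q2pos by (simp add: sum_pos)
  have "sum Q1 I0 \<le> S1" unfolding S1_def
    using finV V1 V2 nonneg1 by (intro sum_mono2) auto
  hence S1: "S1 > 0" using T1 by linarith
  have "sum Q2 I0 \<le> S2" unfolding S2_def
    using finV V1 V2 nonneg2 by (intro sum_mono2) auto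
  hence S2: "S2 > 0" using T2 by linarith
  define c where "c = b / S1 - 1 / S2"
  have RI0: "R i = Q2 i * c" if "i \<in> I0" for i
    using ref that unfolding R_def Rval_def c_def S1_def S2_def by (simp add: algebra_simps)
  have sumR: "sum R V = 0"
  proof -
    have "sum R V = sum Q1 V / S1 - sum Q2 V / S2"
      unfolding R_def Rval_def S1_def S2_def by (simp add: sum_subtractf sum_divide_distrib[symmetric])
    thus ?thesis using S1 S2 unfolding S1_def S2_def by simp
  qed
  have split: "sum R V = sum R I0 + sum R (V - I0)"
    using finV V1 by (metis add.commute sum.subset_diff)
  have M: "Mval Q1 Q2 V = median xs" unfolding Mval_def xs_def R_def by simp
  show ?thesis
  proof (cases "c = 0")
    case True
    have R0: "R i = 0" if "i \<in> I0" for i using RI0[OF that] True by simp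
    have "median xs \<ge> 0" unfolding xs_def
      by (rule median_ge, rule count_lemma[OF finV V1 majV]) (simp add: R0)
    moreover have "median xs \<le> 0" unfolding xs_def
      by (rule median_le, rule count_lemma[OF finV V1 majV]) (simp add: R0)
    ultimately have M0: "Mval Q1 Q2 V = 0" using M by simp
    have bS: "S1 = b * S2" using True S1 S2 unfolding c_def by (simp add: field_simps)
    have Rne: "R i \<noteq> 0" if i: "i \<in> V - I0" for i
    proof
      assume "R i = 0"
      hence "Q1 i / S1 = Q2 i / S2" unfolding R_def Rval_def S1_def S2_def by simp
      hence e: "Q1 i = b * Q2 i" using bS S1 S2 b by (simp add: field_simps)
      have sT: "sum Q1 I0 = b * sum Q2 I0" using ref by (simp add: sum_distrib_left)
      have "is_differential Q1 Q2 I0 i" using I0_largest i V2 by auto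
      thus False unfolding is_differential_def using e sT b T2 by simp
    qed
    have "Wstep Q1 Q2 V = V - I0"
      unfolding Wstep_def Wplus_def Wminus_def using M0 Rne R0 unfolding R_def
      by (auto simp: linorder_neq_iff)
    thus ?thesis using V1 by auto
  next
    case False
    show ?thesis
    proof (cases "c > 0")
      case True
      have Rp: "R i > 0" if "i \<in> I0" for i using RI0[OF that] True Q2pos[OF that] by simp
      have "median xs > 0" unfolding xs_def
        by (rule median_gt, rule count_lemma[OF finV V1 majV]) (simp add: Rp)
      hence Mp: "Mval Q1 Q2 V > 0" using M by simp
      have W: "Wstep Q1 Q2 V = {i\<in>V. R i \<le> 0}"
        unfolding Wstep_def Wminus_def Wzero_def using Mp unfolding R_def by auto
      have "sum R I0 > 0" using finI0 I0ne Rp by (simp add: sum_pos)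
      hence "sum R (V - I0) < 0" using sumR split by linarith
      hence "\<exists>i\<in>V - I0. R i < 0" by (meson not_less sum_nonneg)
      thus ?thesis using W Rp by force
    next
      case False
      hence cn: "c < 0" using \<open>c \<noteq> 0\<close> by simp
      have Rn: "R i < 0" if "i \<in> I0" for i using RI0[OF that] cn Q2pos[OF that]
        by (simp add: mult_pos_neg)
      have "median xs < 0" unfolding xs_def
        by (rule median_lt, rule count_lemma[OF finV V1 majV]) (simp add: Rn)
      hence Mn: "Mval Q1 Q2 V < 0" using M by simp
      have W: "Wstep Q1 Q2 V = {i\<in>V. R i \<ge> 0}"
        unfolding Wstep_def Wplus_def Wzero_def using Mn unfolding R_def by auto
      have "sum (\<lambda>i. - R i) I0 > 0" using finI0 I0ne Rn by (intro sum_pos) auto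
      hence "sum R I0 < 0" by (simp add: sum_negf)
      hence "sum R (V - I0) > 0" using sumR split by linarith
      hence "\<exists>i\<in>V - I0. R i > 0" by (meson not_less sum_nonpos)
      thus ?thesis using W Rn by force
    qed
  qed
qed

lemma Vit_Suc: "Vit Q1 Q2 d (Suc t) = Vit Q1 Q2 d t - Wstep Q1 Q2 (Vit Q1 Q2 d t)"
  by (simp add: Vit_def Let_def split: prod.split)

lemma Uit_Suc: "Uit Q1 Q2 d (Suc t) = Uit Q1 Q2 d t \<union> Wstep Q1 Q2 (Vit Q1 Q2 d t)"
  by (simp add: Uit_def Vit_def Let_def split: prod.split)

theorem theorem1:
  fixes Q1 Q2 :: "nat \<Rightarrow> real" and d :: nat and I0 I1 :: "nat set"
  assumes nonneg1: "\<forall>i\<in>{1..d}. Q1 i \<ge> 0"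
    and nonneg2: "\<forall>i\<in>{1..d}. Q2 i \<ge> 0"
    and pos: "\<forall>i\<in>{1..d}. Q1 i + Q2 i > 0"
    and I0_sub: "I0 \<subseteq> {1..d}"
    and I0_ref: "is_reference_set Q1 Q2 I0"
    and I0_largest: "\<forall>i\<in>{1..d} - I0. is_differential Q1 Q2 I0 i"
    and I1_def: "I1 = {1..d} - I0"
    and majority: "real (card I0) > real d / 2"
  shows "\<exists>T. Wstep Q1 Q2 (Vit Q1 Q2 d T) = {}
            \<and> (\<forall>t<T. Wstep Q1 Q2 (Vit Q1 Q2 d t) \<noteq> {})
            \<and> T \<le> card I1 + 1
            \<and> Vit Q1 Q2 d T = I0
            \<and> Uit Q1 Q2 d T = I1"
proof -
  obtain b where b: "b > 0" and ref: "\<forall>i\<in>I0. Q1 i = b * Q2 i"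
    using I0_ref unfolding is_reference_set_def by blast
  have maj: "2 * card I0 > d" using majority by linarith
  let ?V = "Vit Q1 Q2 d" and ?U = "Uit Q1 Q2 d" and ?W = "Wstep Q1 Q2"
  have K: "?W V \<subseteq> V - I0 \<and> (V \<noteq> I0 \<longrightarrow> ?W V \<noteq> {})"
    if "I0 \<subseteq> V" "V \<subseteq> {1..d}" for V
    using key[OF nonneg1 nonneg2 pos I0_sub b ref I0_largest maj that] .
  have inv: "I0 \<subseteq> ?V t \<and> ?V t \<subseteq> {1..d} \<and> ?U t = {1..d} - ?V t" for t
  proof (induction t)
    case 0
    then show ?case using I0_sub by (simp add: Vit_def Uit_def)
  next
    case (Suc t)
    have "?W (?V t) \<subseteq> ?V t - I0" using K Suc by blast
    then show ?case using Suc by (auto simp: Vit_Suc Uit_Suc)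
  qed
  have W0: "?W I0 = {}" using K[of I0] I0_sub by auto
  have dec: "(\<forall>s<t. ?V s \<noteq> I0) \<Longrightarrow> card (?V t - I0) + t \<le> card I1" for t
  proof (induction t)
    case 0
    then show ?case by (simp add: Vit_def I1_def)
  next
    case (Suc t)
    have IH: "card (?V t - I0) + t \<le> card I1" using Suc by auto
    have ne: "?V t \<noteq> I0" using Suc.prems by auto
    have k: "?W (?V t) \<subseteq> ?V t - I0" "?W (?V t) \<noteq> {}" using K[of "?V t"] inv[of t] ne by auto
    have fin: "finite (?V t - I0)" using inv[of t] finite_subset by blast
    have eq: "?V (Suc t) - I0 = (?V t - I0) - ?W (?V t)" by (auto simp: Vit_Suc)
    have "card ((?V t - I0) - ?W (?V t)) < card (?V t - I0)"
      using k fin by (metis Diff_subset card_seteq finite_Diff psubsetI psubset_card_mono Diff_disjoint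
           Int_absorb1 Diff_eq_empty_iff Diff_Diff_Int)
    then show ?case using IH eq by simp
  qed
  have ex: "\<exists>t. ?V t = I0"
  proof (rule ccontr)
    assume "\<not> ?thesis"
    hence "card (?V (card I1 + 1) - I0) + (card I1 + 1) \<le> card I1" using dec by blast
    thus False by simp
  qed
  define T where "T = (LEAST t. ?V t = I0)"
  have VT: "?V T = I0" unfolding T_def using ex by (rule LeastI_ex)
  have before: "?V s \<noteq> I0" if "s < T" for s using not_less_Least that unfolding T_def by blast
  have "card (?V T - I0) + T \<le> card I1" using dec before by blast
  hence Tle: "T \<le> card I1 + 1" by simp
  have "?W (?V t) \<noteq> {}" if "t < T" for t
    using K[of "?V t"] inv[of t] before[OF that] by auto
  moreover have "?U T = I1" using inv[of T] VT I1_def by simp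
  ultimately show ?thesis using VT W0 Tle by blast
qed

end
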